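(* Let $\Delta>0$, $\varepsilon\in(0,0.9]$, $\delta\in(0,1]$ and $k\ge1$ an integer. The mechanism that answers a real-valued query of sensitivity at most $\Delta$ by adding independent Laplacian noise with variance $8k\Delta^2\log(e+\varepsilon/\delta)/\varepsilon^2$ satisfies $(\varepsilon,\delta)$-differential privacy under $k$-fold adaptive composition. Moreover, the mean squared error achieved (summed over the $k$ query answers) is $O\big(k^2\Delta^2\log(e+\varepsilon/\delta)/\varepsilon^2\big)$.
   Context: Databases carry a symmetric neighbor relation $\sim$. A real-valued query $q$ has sensitivity $\max_{D\sim D'}|q(D)-q(D')|$. The Laplacian noise with scale $\beta>0$ has density $\frac1{2\beta}e^{-|x|/\beta}$ and variance $2\beta^2$; the mechanism outputs $q(D)+Z$ with $Z$ such noise, independent of everything else. $k$-fold adaptive composition with bit $b\in\{0,1\}$ unknown to the adversary: an adversary with internal randomness $R$, at each step $i=1,\dots,k$, chooses (as a function of $R$ and previous outputs) neighboring databases $D^{i,0}\sim D^{i,1}$ and a real-valued query $q_i$ of sensitivity at most $\Delta$, and receives $y_i=q_i(D^{i,b})+Z_i$ with fresh independent noise $Z_i$. The view is $V^b=(R,Y_1^b,\dots,Y_k^b)$; $(\varepsilon,\delta)$-differential privacy under composition means that for every adversary and every measurable set $S$ of views, $\mathbb P(V^0\in S)\le e^{\varepsilon}\mathbb P(V^1\in S)+\delta$ and symmetrically with $V^0,V^1$ swapped. *)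

theory Defs
  imports "HOL-Probability.Probability"
begin

definition laplace :: "real \<Rightarrow> real measure" where
  "laplace \<beta> = density lborel (\<lambda>x. ennreal (exp (- \<bar>x\<bar> / \<beta>) / (2 * \<beta>)))"

definition sensitivity_le :: "('db \<Rightarrow> 'db \<Rightarrow> bool) \<Rightarrow> ('db \<Rightarrow> real) \<Rightarrow> real \<Rightarrow> bool" where
  "sensitivity_le nb q \<Delta> \<longleftrightarrow> (\<forall>D D'. nb D D' \<longrightarrow> \<bar>q D - q D'\<bar> \<le> \<Delta>)"

definition chosen_val :: "'db \<times> 'db \<times> ('db \<Rightarrow> real) \<Rightarrow> bool \<Rightarrow> real" where
  "chosen_val c b = (case c of (D0, D1, q) \<Rightarrow> q (if b then D1 else D0))"

text \<open>Adversary: at step i, given its randomness r and the previous outputs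
  (an extensional function on {..<i}), chooses (D0, D1, q).\<close>
type_synonym ('r, 'db) adversary = "nat \<Rightarrow> 'r \<Rightarrow> (nat \<Rightarrow> real) \<Rightarrow> 'db \<times> 'db \<times> ('db \<Rightarrow> real)"

definition valid_adversary ::
  "('db \<Rightarrow> 'db \<Rightarrow> bool) \<Rightarrow> real \<Rightarrow> 'r measure \<Rightarrow> ('r, 'db) adversary \<Rightarrow> bool" where
  "valid_adversary nb \<Delta> MR A \<longleftrightarrow>
     (\<forall>i. \<forall>r\<in>space MR. \<forall>h\<in>space (PiM {..<i} (\<lambda>_. borel :: real measure)).
        (case A i r h of (D0, D1, q) \<Rightarrow> nb D0 D1 \<and> sensitivity_le nb q \<Delta>)) \<and>
     (\<forall>i b. (\<lambda>(r, h). chosen_val (A i r h) b)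
              \<in> borel_measurable (MR \<Otimes>\<^sub>M PiM {..<i} (\<lambda>_. borel :: real measure)))"

fun outs :: "('r, 'db) adversary \<Rightarrow> bool \<Rightarrow> 'r \<Rightarrow> (nat \<Rightarrow> real) \<Rightarrow> nat \<Rightarrow> (nat \<Rightarrow> real)" where
  "outs A b r z 0 = (\<lambda>_. undefined)"
| "outs A b r z (Suc i) =
     (let h = outs A b r z i in h(i := chosen_val (A i r h) b + z i))"

definition view :: "real measure \<Rightarrow> 'r measure \<Rightarrow> ('r, 'db) adversary \<Rightarrow> bool \<Rightarrow> nat
    \<Rightarrow> ('r \<times> (nat \<Rightarrow> real)) measure" where
  "view N MR A b k =
     distr (MR \<Otimes>\<^sub>M PiM {..<k} (\<lambda>_. N)) (MR \<Otimes>\<^sub>M PiM {..<k} (\<lambda>_. borel))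
       (\<lambda>(r, z). (r, outs A b r z k))"

text \<open>(eps, delta)-differential privacy under k-fold adaptive composition, for all
  adversaries whose internal randomness has type 'r.\<close>
definition adaptive_dp :: "('db \<Rightarrow> 'db \<Rightarrow> bool) \<Rightarrow> real \<Rightarrow> real measure \<Rightarrow> nat \<Rightarrow> real \<Rightarrow> real
    \<Rightarrow> 'r itself \<Rightarrow> bool" where
  "adaptive_dp nb \<Delta> N k \<epsilon> \<delta> (_ :: 'r itself) \<longleftrightarrow>
     (\<forall>(MR :: 'r measure) (A :: ('r, 'db) adversary).
        prob_space MR \<and> valid_adversary nb \<Delta> MR A \<longrightarrow>
        (\<forall>S \<in> sets (MR \<Otimes>\<^sub>M PiM {..<k} (\<lambda>_. borel)).
           measure (view N MR A False k) S \<le> exp \<epsilon> * measure (view N MR A True k) S + \<delta> \<and>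
           measure (view N MR A True k) S \<le> exp \<epsilon> * measure (view N MR A False k) S + \<delta>))"

definition comp_mse :: "real measure \<Rightarrow> 'r measure \<Rightarrow> ('r, 'db) adversary \<Rightarrow> bool \<Rightarrow> nat \<Rightarrow> ennreal" where
  "comp_mse N MR A b k =
     (\<integral>\<^sup>+ (r, z). ennreal (\<Sum>i<k. (outs A b r z k i - chosen_val (A i r (outs A b r z i)) b)\<^sup>2)
        \<partial>(MR \<Otimes>\<^sub>M PiM {..<k} (\<lambda>_. N)))"

end

theory Submission
  imports Defs
begin

lemma outs_ext: "outs A b r z i \<in> extensional {..<i}"
  by (induction i) (auto simp: Let_def extensional_def)

lemma outs_local: "(\<And>j. j < i \<Longrightarrow> z j = z' j) \<Longrightarrow> outs A b r z i = outs A b r z' i"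
  by (induction i) (auto simp: Let_def)

lemma outs_stable: "i < n \<Longrightarrow> outs A b r z n i = outs A b r z (Suc i) i"
  by (induction n) (auto simp: Let_def less_Suc_eq)

lemma outs_space: "outs A b r z i \<in> space (PiM {..<i} (\<lambda>_. borel :: real measure))"
  using outs_ext by (auto simp: space_PiM PiE_def)

lemma outs_meas:
  assumes "valid_adversary nb \<Delta> MR A" "i \<le> n"
  shows "(\<lambda>(r,z). outs A b r z i) \<in> measurable (MR \<Otimes>\<^sub>M PiM {..<n} (\<lambda>_. borel :: real measure)) (PiM {..<i} (\<lambda>_. borel :: real measure))"
  using assms(2)
proof (induction i)
  case 0
  then show ?case by (auto intro!: measurable_const simp: space_PiM)
next
  case (Suc i)
  have IH: "(\<lambda>(r,z). outs A b r z i) \<in> measurable (MR \<Otimes>\<^sub>M PiM {..<n} (\<lambda>_. borel)) (PiM {..<i} (\<lambda>_. borel :: real measure))"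
    using Suc by simp
  have cv: "(\<lambda>(r, h). chosen_val (A i r h) b) \<in> borel_measurable (MR \<Otimes>\<^sub>M PiM {..<i} (\<lambda>_. borel :: real measure))"
    using assms(1) unfolding valid_adversary_def by blast
  have p: "(\<lambda>(r,z). (r, outs A b r z i)) \<in> measurable (MR \<Otimes>\<^sub>M PiM {..<n} (\<lambda>_. borel)) (MR \<Otimes>\<^sub>M PiM {..<i} (\<lambda>_. borel :: real measure))"
    using IH by (auto intro!: measurable_Pair simp: split_beta')
  have c2: "(\<lambda>(r,z). chosen_val (A i r (outs A b r z i)) b) \<in> borel_measurable (MR \<Otimes>\<^sub>M PiM {..<n} (\<lambda>_. borel :: real measure))"
    using measurable_comp[OF p cv] by (simp add: comp_def split_beta')
  have zi: "(\<lambda>(r,z). (z::nat\<Rightarrow>real) i) \<in> borel_measurable (MR \<Otimes>\<^sub>M PiM {..<n} (\<lambda>_. borel :: real measure))"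
    using Suc.prems by (auto simp: split_beta')
  show ?case
  proof (rule measurable_PiM_single')
    fix j assume j: "j \<in> {..<Suc i}"
    show "(\<lambda>\<omega>. (case \<omega> of (r, z) \<Rightarrow> outs A b r z (Suc i)) j) \<in> borel_measurable (MR \<Otimes>\<^sub>M PiM {..<n} (\<lambda>_. borel))"
    proof (cases "j = i")
      case True
      have "(\<lambda>\<omega>. (case \<omega> of (r, z) \<Rightarrow> chosen_val (A i r (outs A b r z i)) b) + (case \<omega> of (r, z) \<Rightarrow> (z::nat\<Rightarrow>real) i)) \<in> borel_measurable (MR \<Otimes>\<^sub>M PiM {..<n} (\<lambda>_. borel))"
        using c2 zi by (rule borel_measurable_add)
      moreover have "\<And>\<omega>. (case \<omega> of (r, z) \<Rightarrow> outs A b r z (Suc i)) j = (case \<omega> of (r, z) \<Rightarrow> chosen_val (A i r (outs A b r z i)) b) + (case \<omega> of (r, z) \<Rightarrow> (z::nat\<Rightarrow>real) i)"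
        using True by (auto simp: split_beta' Let_def)
      ultimately show ?thesis by simp
    next
      case False
      with j have "j < i" by auto
      have "(\<lambda>\<omega>. (case \<omega> of (r, z) \<Rightarrow> outs A b r z i) j) \<in> borel_measurable (MR \<Otimes>\<^sub>M PiM {..<n} (\<lambda>_. borel))"
        using measurable_comp[OF IH measurable_component_singleton[of j "{..<i}" "\<lambda>_. borel :: real measure"]] \<open>j < i\<close>
        by (simp add: comp_def split_beta')
      moreover have "\<And>\<omega>. (case \<omega> of (r, z) \<Rightarrow> outs A b r z (Suc i)) j = (case \<omega> of (r, z) \<Rightarrow> outs A b r z i) j"
        using False by (auto simp: split_beta' Let_def)
      ultimately show ?thesis by simp
    qed
  next
    show "(\<lambda>\<omega> j. (case \<omega> of (r, z) \<Rightarrow> outs A b r z (Suc i)) j) \<in> space (MR \<Otimes>\<^sub>M PiM {..<n} (\<lambda>_. borel)) \<rightarrow> (\<Pi>\<^sub>E j\<in>{..<Suc i}. space (borel::real measure))"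
      using outs_space[of A b _ _ "Suc i"] by (auto simp: space_PiM split_beta' simp del: outs.simps)
  qed
qed

definition lap :: "real \<Rightarrow> real \<Rightarrow> real" where
  "lap \<beta> x = exp (- \<bar>x\<bar> / \<beta>) / (2 * \<beta>)"

lemma laplace_lap: "laplace \<beta> = density lborel (\<lambda>x. ennreal (lap \<beta> x))"
  by (simp add: laplace_def lap_def)

lemma sets_laplace[simp, measurable_cong]: "sets (laplace \<beta>) = sets borel"
  by (simp add: laplace_def)

lemma space_laplace[simp]: "space (laplace \<beta>) = UNIV"
  by (simp add: laplace_def)

lemma lap_meas[measurable]: "lap \<beta> \<in> borel_measurable borel"
  unfolding lap_def by measurable

lemma lap_shift: "lap \<beta> (s + d) = lap \<beta> s * exp (- (\<bar>s + d\<bar> - \<bar>s\<bar>) / \<beta>)"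
proof -
  have eq: "- \<bar>s + d\<bar> / \<beta> = - \<bar>s\<bar> / \<beta> + (- (\<bar>s + d\<bar> - \<bar>s\<bar>) / \<beta>)"
    by (simp add: diff_divide_distrib)
  show ?thesis unfolding lap_def by (subst eq) (simp add: exp_add[symmetric])
qed

lemma laplace_shift:
  assumes [measurable]: "g \<in> borel_measurable borel"
  shows "(\<integral>\<^sup>+t. g (a + t) \<partial>laplace \<beta>) = (\<integral>\<^sup>+t. g (b + t) * ennreal (exp (- (\<bar>t + (b - a)\<bar> - \<bar>t\<bar>) / \<beta>)) \<partial>laplace \<beta>)"
proof -
  have "(\<integral>\<^sup>+t. g (a + t) \<partial>laplace \<beta>) = (\<integral>\<^sup>+t. ennreal (lap \<beta> t) * g (a + t) \<partial>lborel)"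
    unfolding laplace_lap by (subst nn_integral_density) auto
  also have "\<dots> = ennreal \<bar>1\<bar> * (\<integral>\<^sup>+s. ennreal (lap \<beta> ((b - a) + 1 * s)) * g (a + ((b - a) + 1 * s)) \<partial>lborel)"
    by (rule nn_integral_real_affine) auto
  also have "\<dots> = (\<integral>\<^sup>+s. ennreal (lap \<beta> s) * (g (b + s) * ennreal (exp (- (\<bar>s + (b - a)\<bar> - \<bar>s\<bar>) / \<beta>))) \<partial>lborel)"
  proof -
    have "\<And>s. ennreal (lap \<beta> ((b - a) + 1 * s)) * g (a + ((b - a) + 1 * s)) = ennreal (lap \<beta> s) * (g (b + s) * ennreal (exp (- (\<bar>s + (b - a)\<bar> - \<bar>s\<bar>) / \<beta>)))"
    proof -
      fix s
      have "lap \<beta> ((b - a) + 1 * s) = lap \<beta> (s + (b - a))" by (simp add: add.commute)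
      also have "\<dots> = lap \<beta> s * exp (- (\<bar>s + (b - a)\<bar> - \<bar>s\<bar>) / \<beta>)" by (rule lap_shift)
      finally have "ennreal (lap \<beta> ((b - a) + 1 * s)) = ennreal (lap \<beta> s) * ennreal (exp (- (\<bar>s + (b - a)\<bar> - \<bar>s\<bar>) / \<beta>))"
        by (simp add: ennreal_mult'' )
      moreover have "a + ((b - a) + 1 * s) = b + s" by simp
      ultimately show "?thesis s" by (simp add: ac_simps)
    qed
    then show ?thesis by simp
  qed
  also have "\<dots> = (\<integral>\<^sup>+t. g (b + t) * ennreal (exp (- (\<bar>t + (b - a)\<bar> - \<bar>t\<bar>) / \<beta>)) \<partial>laplace \<beta>)"
    unfolding laplace_lap by (subst nn_integral_density) auto
  finally show ?thesis .
qed

lemma laplace_abs_moment: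
  assumes b: "\<beta> > 0"
  shows "(\<integral>\<^sup>+x. ennreal (\<bar>x\<bar> ^ i) \<partial>laplace \<beta>) = ennreal (fact i * \<beta> ^ i)"
proof -
  let ?F = "\<lambda>x. ennreal (lap \<beta> x * \<bar>x\<bar> ^ i)"
  have [measurable]: "?F \<in> borel_measurable borel" by measurable
  have "(\<integral>\<^sup>+x. ennreal (\<bar>x\<bar> ^ i) \<partial>laplace \<beta>) = (\<integral>\<^sup>+x. ?F x \<partial>lborel)"
    unfolding laplace_lap using b
    by (subst nn_integral_density) (auto simp: ennreal_mult[symmetric] lap_def intro!: nn_integral_cong)
  also have "\<dots> = (\<integral>\<^sup>+x. ?F x * indicator {0<..} x + ?F x * indicator {..<0} x \<partial>lborel)"
  proof (rule nn_integral_cong_AE)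
    have "AE x in lborel. x \<noteq> 0" by (rule AE_lborel_singleton)
    then show "AE x in lborel. ?F x = ?F x * indicator {0<..} x + ?F x * indicator {..<0} x"
      by eventually_elim (auto split: split_indicator)
  qed
  also have "\<dots> = (\<integral>\<^sup>+x. ?F x * indicator {0<..} x \<partial>lborel) + (\<integral>\<^sup>+x. ?F x * indicator {..<0} x \<partial>lborel)"
    by (rule nn_integral_add) auto
  also have "(\<integral>\<^sup>+x. ?F x * indicator {..<0} x \<partial>lborel) = ennreal \<bar>-1\<bar> * (\<integral>\<^sup>+x. ?F (0 + (-1) * x) * indicator {..<0} (0 + (-1) * x) \<partial>lborel)"
    by (rule nn_integral_real_affine) auto
  also have "\<dots> = (\<integral>\<^sup>+x. ?F x * indicator {0<..} x \<partial>lborel)"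
    by (auto simp: lap_def intro!: nn_integral_cong split: split_indicator)
  also have "(\<integral>\<^sup>+x. ?F x * indicator {0<..} x \<partial>lborel) = (\<integral>\<^sup>+x. ennreal (erlang_density 0 (1/\<beta>) x * x ^ i) / 2 \<partial>lborel)"
  proof (rule nn_integral_cong_AE)
    have "AE x in lborel. x \<noteq> 0" by (rule AE_lborel_singleton)
    then show "AE x in lborel. ?F x * indicator {0<..} x = ennreal (erlang_density 0 (1/\<beta>) x * x ^ i) / 2"
    proof eventually_elim
      case (elim x)
      show ?case
      proof (cases "x > 0")
        case True
        have e1: "lap \<beta> x * \<bar>x\<bar> ^ i = erlang_density 0 (1/\<beta>) x * x ^ i / 2"
          using True by (simp add: lap_def erlang_density_def field_simps)
        have e2: "ennreal (erlang_density 0 (1/\<beta>) x * x ^ i) / 2 = ennreal (erlang_density 0 (1/\<beta>) x * x ^ i / 2)"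
          using divide_ennreal[of "erlang_density 0 (1/\<beta>) x * x ^ i" 2] True b by simp
        show ?thesis by (subst e2, subst e1[symmetric]) (simp add: True)
      next
        case False
        with elim have "x < 0" by simp
        then show ?thesis by (simp add: erlang_density_def)
      qed
    qed
  qed
  also have "\<dots> = (\<integral>\<^sup>+x. ennreal (erlang_density 0 (1/\<beta>) x * x ^ i) \<partial>lborel) / 2"
    by (rule nn_integral_divide) auto
  also have "\<dots> = ennreal (fact i / (1/\<beta>) ^ i) / 2"
    using b by (subst nn_integral_erlang_ith_moment) auto
  finally have "(\<integral>\<^sup>+x. ennreal (\<bar>x\<bar> ^ i) \<partial>laplace \<beta>) = ennreal (fact i / (1/\<beta>) ^ i) / 2 + ennreal (fact i / (1/\<beta>) ^ i) / 2" .
  also have "\<dots> = ennreal (fact i * \<beta> ^ i)"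
  proof -
    have y: "fact i / (1/\<beta>) ^ i = fact i * \<beta> ^ i" by (simp add: power_one_over)
    have "ennreal (fact i * \<beta> ^ i) / 2 = ennreal (fact i * \<beta> ^ i / 2)"
      using divide_ennreal[of "fact i * \<beta> ^ i" 2] b by simp
    moreover have "ennreal (fact i * \<beta> ^ i / 2) + ennreal (fact i * \<beta> ^ i / 2) = ennreal (fact i * \<beta> ^ i)"
      using b by (subst ennreal_plus[symmetric]) auto
    ultimately show ?thesis by (simp add: y)
  qed
  finally show ?thesis .
qed

lemma prob_space_laplace: "\<beta> > 0 \<Longrightarrow> prob_space (laplace \<beta>)"
proof -
  assume b: "\<beta> > 0"
  have "(\<integral>\<^sup>+x. 1 \<partial>laplace \<beta>) = 1" using laplace_abs_moment[OF b, of 0] by simp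
  then show ?thesis by (intro prob_spaceI) (simp add: nn_integral_const)
qed

lemma exp_neg_le_quad: assumes "\<bar>x::real\<bar> \<le> 1" shows "x + exp (- x) - 1 \<le> x\<^sup>2"
proof (cases "x \<le> 0")
  case True
  then show ?thesis using exp_bound[of "-x"] assms by (simp add: power2_eq_square)
next
  case False
  let ?u = "x"
  have "exp ?u \<ge> 1 + ?u" by (rule exp_ge_add_one_self)
  have "exp (- x) = 1 / exp x" by (simp add: exp_minus field_simps)
  also have "\<dots> \<le> 1 / (1 + x)" using False \<open>exp ?u \<ge> 1 + ?u\<close> by (intro divide_left_mono) auto
  also have "\<dots> \<le> 1 - x + x\<^sup>2"
  proof -
    have "1 \<le> (1 + x) * (1 - x + x\<^sup>2)" using False by (simp add: power2_eq_square algebra_simps power3_eq_cube[symmetric]) 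
    then show ?thesis using False by (simp add: divide_le_eq mult.commute)
  qed
  finally show ?thesis by simp
qed

lemma one_step:
  assumes b: "\<beta> > 0" and d: "\<bar>d\<bar> \<le> \<Delta>" and c0: "\<Delta> / \<beta> \<le> 1" and l: "l > 0"
  shows "(\<integral>\<^sup>+t. ennreal (exp (l * ((\<bar>t + d\<bar> - \<bar>t\<bar>) / \<beta>))) \<partial>laplace \<beta>)
           \<le> ennreal (exp (l * (\<Delta> / \<beta>)\<^sup>2 + l\<^sup>2 * (\<Delta> / \<beta>)\<^sup>2 / 2))"
proof -
  define f where "f t = (\<bar>t + d\<bar> - \<bar>t\<bar>) / \<beta>" for t
  define c where "c = \<bar>d\<bar> / \<beta>"
  have fc: "\<bar>f t\<bar> \<le> c" for t
    unfolding f_def c_def using b by (simp add: abs_divide divide_right_mono abs_triangle_ineq3)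
  have cc0: "c \<le> \<Delta> / \<beta>" unfolding c_def using b d by (simp add: divide_right_mono)
  have c1: "c \<le> 1" using cc0 c0 by simp
  have c_nn: "0 \<le> c" unfolding c_def using b by simp
  interpret N: prob_space "laplace \<beta>" by (rule prob_space_laplace[OF b])
  have fm[measurable]: "f \<in> borel_measurable borel" unfolding f_def by measurable
  have fint: "integrable (laplace \<beta>) f"
    by (rule N.integrable_const_bound[where B=c]) (auto simp: fc)
  have eint: "integrable (laplace \<beta>) (\<lambda>t. exp (- f t))"
  proof (rule N.integrable_const_bound[where B="exp c"])
    show "AE x in laplace \<beta>. norm (exp (- f x)) \<le> exp c" using fc by (auto intro!: AE_I2 simp: abs_le_iff)
  qed auto
  have "(\<integral>\<^sup>+t. ennreal (exp (- f t)) \<partial>laplace \<beta>) = (\<integral>\<^sup>+t. 1 * ennreal (exp (- (\<bar>t + (d - 0)\<bar> - \<bar>t\<bar>) / \<beta>)) \<partial>laplace \<beta>)"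
    by (intro nn_integral_cong) (simp add: f_def minus_divide_left)
  also have "\<dots> = (\<integral>\<^sup>+t. 1 \<partial>laplace \<beta>)"
  proof -
    have sh: "(\<integral>\<^sup>+t. (\<lambda>_. 1::ennreal) (0 + t) \<partial>laplace \<beta>) = (\<integral>\<^sup>+t. (\<lambda>_. 1::ennreal) (d + t) * ennreal (exp (- (\<bar>t + (d - 0)\<bar> - \<bar>t\<bar>) / \<beta>)) \<partial>laplace \<beta>)"
      by (rule laplace_shift) simp
    show ?thesis using sh by (simp only:)
  qed
  also have "\<dots> = 1" using N.emeasure_space_1 by (simp add: nn_integral_const)
  finally have "(\<integral>\<^sup>+t. ennreal (exp (- f t)) \<partial>laplace \<beta>) = 1" .
  then have E1: "(\<integral>t. exp (- f t) \<partial>laplace \<beta>) = 1"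
    by (subst (asm) nn_integral_eq_integral[OF eint]) auto
  have mu: "N.expectation f \<le> c\<^sup>2"
  proof -
    have "N.expectation f = (\<integral>t. f t + exp (- f t) - 1 \<partial>laplace \<beta>)"
      using fint eint E1 by (simp add: Bochner_Integration.integral_diff Bochner_Integration.integral_add N.prob_space[simplified])
    also have "\<dots> \<le> (\<integral>t. c\<^sup>2 \<partial>laplace \<beta>)"
    proof (rule integral_mono)
      show "integrable (laplace \<beta>) (\<lambda>t. f t + exp (- f t) - 1)" using fint eint by auto
      fix t
      have "f t + exp (- f t) - 1 \<le> (f t)\<^sup>2" using fc[of t] c1 by (intro exp_neg_le_quad) simp
      also have "\<dots> \<le> c\<^sup>2" using fc[of t] by (metis abs_ge_zero power2_abs power_mono)
      finally show "f t + exp (- f t) - 1 \<le> c\<^sup>2" .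
    qed auto
    also have "\<dots> = c\<^sup>2" by (simp add: N.prob_space[simplified])
    finally show ?thesis .
  qed
  interpret R: interval_bounded_random_variable "laplace \<beta>" f "-c" c
  proof unfold_locales
    show "f \<in> borel_measurable (laplace \<beta>)" by simp
    have "\<And>x. f x \<in> {-c..c}" using fc by (metis abs_le_iff atLeastAtMost_iff minus_le_iff)
    then show "AE x in laplace \<beta>. f x \<in> {-c..c}" by simp
  qed
  have H: "(\<integral>\<^sup>+t. ennreal (exp (l * (f t - N.expectation f))) \<partial>laplace \<beta>) \<le> ennreal (exp (l\<^sup>2 * (c - - c)\<^sup>2 / 8))"
    using R.Hoeffdings_lemma_nn_integral[OF l] by simp
  have "(\<integral>\<^sup>+t. ennreal (exp (l * f t)) \<partial>laplace \<beta>) = (\<integral>\<^sup>+t. ennreal (exp (l * N.expectation f)) * ennreal (exp (l * (f t - N.expectation f))) \<partial>laplace \<beta>)"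
    by (intro nn_integral_cong) (simp add: ennreal_mult[symmetric] exp_add[symmetric] right_diff_distrib)
  also have "\<dots> = ennreal (exp (l * N.expectation f)) * (\<integral>\<^sup>+t. ennreal (exp (l * (f t - N.expectation f))) \<partial>laplace \<beta>)"
    by (rule nn_integral_cmult) auto
  also have "\<dots> \<le> ennreal (exp (l * N.expectation f)) * ennreal (exp (l\<^sup>2 * (c - - c)\<^sup>2 / 8))"
    by (rule mult_left_mono[OF H]) auto
  also have "\<dots> = ennreal (exp (l * N.expectation f + l\<^sup>2 * c\<^sup>2 / 2))"
    by (simp add: ennreal_mult[symmetric] exp_add power2_eq_square algebra_simps)
  also have "\<dots> \<le> ennreal (exp (l * (\<Delta> / \<beta>)\<^sup>2 + l\<^sup>2 * (\<Delta> / \<beta>)\<^sup>2 / 2))"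
  proof -
    have cs: "c\<^sup>2 \<le> (\<Delta> / \<beta>)\<^sup>2" using cc0 c_nn by (intro power_mono) auto
    have "l * N.expectation f \<le> l * (\<Delta> / \<beta>)\<^sup>2" using mu cs l by (intro mult_left_mono) auto
    moreover have "l\<^sup>2 * c\<^sup>2 / 2 \<le> l\<^sup>2 * (\<Delta> / \<beta>)\<^sup>2 / 2" using cs by (intro divide_right_mono mult_left_mono) auto
    ultimately show ?thesis by (intro ennreal_leI) simp
  qed
  finally show ?thesis by (simp add: f_def)
qed

abbreviation PB :: "nat \<Rightarrow> (nat \<Rightarrow> real) measure" where "PB n \<equiv> PiM {..<n} (\<lambda>_. borel)"
abbreviation PN :: "real \<Rightarrow> nat \<Rightarrow> (nat \<Rightarrow> real) measure" where "PN \<beta> n \<equiv> PiM {..<n} (\<lambda>_. laplace \<beta>)"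

lemma sets_PN: "sets (PiM I (\<lambda>_. laplace \<beta>)) = sets (PiM I (\<lambda>_. borel :: real measure))"
  by (rule sets_PiM_cong) auto

lemma meas_PN: "f \<in> measurable (PiM I (\<lambda>_. borel :: real measure)) M \<Longrightarrow> f \<in> measurable (PiM I (\<lambda>_. laplace \<beta>)) M"
  using measurable_cong_sets[OF sets_PN refl, of I \<beta> M] by simp

lemma cv_meas:
  assumes "valid_adversary nb \<Delta> MR A" "i \<le> n"
  shows "(\<lambda>(r,z). chosen_val (A i r (outs A b r z i)) c) \<in> borel_measurable (MR \<Otimes>\<^sub>M PB n)"
proof -
  have cv: "(\<lambda>(r, h). chosen_val (A i r h) c) \<in> borel_measurable (MR \<Otimes>\<^sub>M PB i)"
    using assms(1) unfolding valid_adversary_def by blast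
  have p: "(\<lambda>(r,z). (r, outs A b r z i)) \<in> measurable (MR \<Otimes>\<^sub>M PB n) (MR \<Otimes>\<^sub>M PB i)"
    using outs_meas[OF assms] by (auto intro!: measurable_Pair simp: split_beta')
  show ?thesis
    using measurable_comp[OF p cv] by (simp add: comp_def split_beta')
qed

definition Dv :: "('r, 'db) adversary \<Rightarrow> bool \<Rightarrow> 'r \<Rightarrow> (nat \<Rightarrow> real) \<Rightarrow> nat \<Rightarrow> real" where
  "Dv A b r h i = chosen_val (A i r h) b - chosen_val (A i r h) (\<not> b)"

definition loss :: "real \<Rightarrow> ('r, 'db) adversary \<Rightarrow> bool \<Rightarrow> 'r \<Rightarrow> (nat \<Rightarrow> real) \<Rightarrow> nat \<Rightarrow> real" where
  "loss \<beta> A b r z i = (\<bar>z i + Dv A b r (outs A b r z i) i\<bar> - \<bar>z i\<bar>) / \<beta>"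

definition Lam :: "real \<Rightarrow> ('r, 'db) adversary \<Rightarrow> bool \<Rightarrow> 'r \<Rightarrow> (nat \<Rightarrow> real) \<Rightarrow> nat \<Rightarrow> real" where
  "Lam \<beta> A b r z k = (\<Sum>i<k. loss \<beta> A b r z i)"

lemma Lam_meas:
  assumes "valid_adversary nb \<Delta> MR A" "k \<le> n"
  shows "(\<lambda>(r,z). Lam \<beta> A b r z k) \<in> borel_measurable (MR \<Otimes>\<^sub>M PB n)"
proof -
  have "(\<lambda>(r,z). loss \<beta> A b r z i) \<in> borel_measurable (MR \<Otimes>\<^sub>M PB n)" if i: "i < k" for i
  proof -
    have i': "i \<le> n" "i \<in> {..<n}" using i assms(2) by auto
    define C1 where "C1 = (\<lambda>(r,z). chosen_val (A i r (outs A b r z i)) b)"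
    define C2 where "C2 = (\<lambda>(r,z). chosen_val (A i r (outs A b r z i)) (\<not>b))"
    have c1[measurable]: "C1 \<in> borel_measurable (MR \<Otimes>\<^sub>M PB n)"
      unfolding C1_def by (rule cv_meas[OF assms(1) i'(1)])
    have c2[measurable]: "C2 \<in> borel_measurable (MR \<Otimes>\<^sub>M PB n)"
      unfolding C2_def by (rule cv_meas[OF assms(1) i'(1)])
    have zi[measurable]: "(\<lambda>\<omega>. snd \<omega> i) \<in> borel_measurable (MR \<Otimes>\<^sub>M PB n)"
      using i'(2) by auto
    have "(\<lambda>\<omega>. (\<bar>snd \<omega> i + (C1 \<omega> - C2 \<omega>)\<bar> - \<bar>snd \<omega> i\<bar>) / \<beta>) \<in> borel_measurable (MR \<Otimes>\<^sub>M PB n)"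
      by (intro borel_measurable_divide borel_measurable_diff borel_measurable_add borel_measurable_abs c1 c2 zi measurable_const) simp
    moreover have "(\<lambda>(r,z). loss \<beta> A b r z i) = (\<lambda>\<omega>. (\<bar>snd \<omega> i + (C1 \<omega> - C2 \<omega>)\<bar> - \<bar>snd \<omega> i\<bar>) / \<beta>)"
      by (auto simp: loss_def Dv_def C1_def C2_def)
    ultimately show ?thesis by simp
  qed
  then show ?thesis unfolding Lam_def by (auto simp: split_beta' intro!: borel_measurable_sum)
qed

lemma upd_meas:
  assumes f: "f \<in> measurable M (PB k)" and x: "x \<in> borel_measurable M"
  shows "(\<lambda>\<omega>. (f \<omega>)(k := x \<omega>)) \<in> measurable M (PB (Suc k))"
proof (rule measurable_PiM_single')
  fix j assume j: "j \<in> {..<Suc k}"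
  show "(\<lambda>\<omega>. ((f \<omega>)(k := x \<omega>)) j) \<in> borel_measurable M"
  proof (cases "j = k")
    case True then show ?thesis using x by simp
  next
    case False
    with j have "j \<in> {..<k}" by auto
    then have "(\<lambda>\<omega>. f \<omega> j) \<in> borel_measurable M"
      using measurable_comp[OF f measurable_component_singleton[of j "{..<k}" "\<lambda>_. borel :: real measure"]]
      by (simp add: comp_def)
    then show ?thesis using False by simp
  qed
next
  show "(\<lambda>\<omega> j. ((f \<omega>)(k := x \<omega>)) j) \<in> space M \<rightarrow> (\<Pi>\<^sub>E j\<in>{..<Suc k}. space (borel::real measure))"
    using measurable_space[OF f] by (auto simp: space_PiM PiE_def extensional_def)
qed

lemma outs_upd_k: "outs A c r (z(k := t)) k = outs A c r z k"
  by (rule outs_local) simp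

lemma outs_upd_Suc: "outs A c r (z(k := t)) (Suc k) = (outs A c r z k)(k := chosen_val (A k r (outs A c r z k)) c + t)"
  by (simp add: Let_def outs_upd_k)

lemma loss_upd: "i < k \<Longrightarrow> loss \<beta> A b r (z(k := t)) i = loss \<beta> A b r z i"
  unfolding loss_def by (subst outs_local[of i "z(k:=t)" z]) auto

lemma loss_upd_k: "loss \<beta> A b r (z(k := t)) k = (\<bar>t + Dv A b r (outs A b r z k) k\<bar> - \<bar>t\<bar>) / \<beta>"
  unfolding loss_def by (simp add: outs_upd_k)

lemma Lam_upd: "Lam \<beta> A b r (z(k := t)) (Suc k) = Lam \<beta> A b r z k + (\<bar>t + Dv A b r (outs A b r z k) k\<bar> - \<bar>t\<bar>) / \<beta>"
  unfolding Lam_def by (simp add: loss_upd loss_upd_k)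

lemma Lam_upd': "Lam \<beta> A b r (z(k := t)) k = Lam \<beta> A b r z k"
  unfolding Lam_def by (simp add: loss_upd)

lemma meas_prod_exp:
  assumes [measurable]: "F \<in> borel_measurable M" "L \<in> borel_measurable M"
  shows "(\<lambda>z. F z * ennreal (exp (- L z))) \<in> borel_measurable M"
  by measurable

lemma outs_r_meas:
  assumes "valid_adversary nb \<Delta> MR A" "r \<in> space MR" "i \<le> n"
  shows "(\<lambda>z. outs A c r z i) \<in> measurable (PB n) (PB i)"
  using measurable_Pair2[OF outs_meas[OF assms(1,3)] assms(2)] by simp

lemma cv_r_meas:
  assumes "valid_adversary nb \<Delta> MR A" "r \<in> space MR"
  shows "(\<lambda>h. chosen_val (A i r h) c) \<in> borel_measurable (PB i)"
proof -
  have "(\<lambda>(r, h). chosen_val (A i r h) c) \<in> borel_measurable (MR \<Otimes>\<^sub>M PB i)"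
    using assms(1) unfolding valid_adversary_def by blast
  from measurable_Pair2[OF this assms(2)] show ?thesis by simp
qed

lemma Lam_r_meas:
  assumes "valid_adversary nb \<Delta> MR A" "r \<in> space MR" "k \<le> n"
  shows "(\<lambda>z. Lam \<beta> A c r z k) \<in> borel_measurable (PB n)"
  using measurable_Pair2[OF Lam_meas[OF assms(1,3)] assms(2)] by simp

lemma laplace_borel_eq: "measurable M (laplace \<beta>) = measurable M borel"
  by (rule measurable_cong_sets) auto

lemma com:
  assumes va: "valid_adversary nb \<Delta> MR A" and b: "\<beta> > 0" and r: "r \<in> space MR"
  shows "g \<in> borel_measurable (PB k) \<Longrightarrow>
    (\<integral>\<^sup>+z. g (outs A (\<not>c) r z k) \<partial>PN \<beta> k) = (\<integral>\<^sup>+z. g (outs A c r z k) * ennreal (exp (- Lam \<beta> A c r z k)) \<partial>PN \<beta> k)"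
proof (induction k arbitrary: g)
  case 0
  then show ?case by (simp add: Lam_def)
next
  case (Suc k)
  note g = Suc.prems
  interpret N: prob_space "laplace \<beta>" by (rule prob_space_laplace[OF b])
  interpret P: product_sigma_finite "\<lambda>_::nat. laplace \<beta>"
    by (simp add: product_sigma_finite_def prob_space_imp_sigma_finite prob_space_laplace b)
  have ins: "{..<Suc k} = insert k {..<k}" by auto
  define G where "G h = (\<integral>\<^sup>+t. g (h(k := chosen_val (A k r h) (\<not>c) + t)) \<partial>laplace \<beta>)" for h
  have Gm: "G \<in> borel_measurable (PB k)"
  proof -
    have sm: "(\<lambda>\<omega>. snd \<omega>) \<in> borel_measurable (PB k \<Otimes>\<^sub>M laplace \<beta>)"
      using measurable_snd laplace_borel_eq by blast
    have fm: "(\<lambda>\<omega>. chosen_val (A k r (fst \<omega>)) (\<not>c)) \<in> borel_measurable (PB k \<Otimes>\<^sub>M laplace \<beta>)"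
      using measurable_comp[OF measurable_fst cv_r_meas[OF va r]] by (simp add: comp_def)
    have "(\<lambda>\<omega>. (fst \<omega>)(k := chosen_val (A k r (fst \<omega>)) (\<not>c) + snd \<omega>)) \<in> measurable (PB k \<Otimes>\<^sub>M laplace \<beta>) (PB (Suc k))"
      by (rule upd_meas[OF measurable_fst borel_measurable_add[OF fm sm]])
    from measurable_comp[OF this g]
    have "case_prod (\<lambda>h t. g (h(k := chosen_val (A k r h) (\<not>c) + t))) \<in> borel_measurable (PB k \<Otimes>\<^sub>M laplace \<beta>)"
      by (simp add: comp_def split_beta')
    from N.borel_measurable_nn_integral[OF this] show ?thesis
      unfolding G_def[abs_def] .
  qed
  have m1: "(\<lambda>z. g (outs A (\<not>c) r z (Suc k))) \<in> borel_measurable (PiM (insert k {..<k}) (\<lambda>_. laplace \<beta>))"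
    using meas_PN[OF measurable_comp[OF outs_r_meas[OF va r order_refl] g]] ins by (simp add: comp_def)
  have m2: "(\<lambda>z. g (outs A c r z (Suc k)) * ennreal (exp (- Lam \<beta> A c r z (Suc k)))) \<in> borel_measurable (PiM (insert k {..<k}) (\<lambda>_. laplace \<beta>))"
  proof -
    have "(\<lambda>z. g (outs A c r z (Suc k))) \<in> borel_measurable (PB (Suc k))"
      using measurable_comp[OF outs_r_meas[OF va r order_refl] g] by (simp add: comp_def)
    from meas_prod_exp[OF this Lam_r_meas[OF va r order_refl]]
    have "(\<lambda>z. g (outs A c r z (Suc k)) * ennreal (exp (- Lam \<beta> A c r z (Suc k)))) \<in> borel_measurable (PB (Suc k))" .
    from meas_PN[OF this] show ?thesis unfolding ins .
  qed
  have "(\<integral>\<^sup>+z. g (outs A (\<not>c) r z (Suc k)) \<partial>PN \<beta> (Suc k))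
      = (\<integral>\<^sup>+z. (\<integral>\<^sup>+t. g (outs A (\<not>c) r (z(k:=t)) (Suc k)) \<partial>laplace \<beta>) \<partial>PN \<beta> k)"
    unfolding ins by (rule P.product_nn_integral_insert[OF _ _ m1]) auto
  also have "\<dots> = (\<integral>\<^sup>+z. G (outs A (\<not>c) r z k) \<partial>PN \<beta> k)"
    by (intro nn_integral_cong) (simp only: outs_upd_Suc G_def)
  also have "\<dots> = (\<integral>\<^sup>+z. G (outs A c r z k) * ennreal (exp (- Lam \<beta> A c r z k)) \<partial>PN \<beta> k)"
    by (rule Suc.IH[OF Gm])
  also have "\<dots> = (\<integral>\<^sup>+z. (\<integral>\<^sup>+t. g (outs A c r (z(k:=t)) (Suc k)) * ennreal (exp (- Lam \<beta> A c r (z(k:=t)) (Suc k))) \<partial>laplace \<beta>) \<partial>PN \<beta> k)"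
  proof (rule nn_integral_cong)
    fix z assume "z \<in> space (PN \<beta> k)"
    define h where "h = outs A c r z k"
    have hs: "h \<in> space (PB k)" unfolding h_def by (rule outs_space)
    have gh: "(\<lambda>x. g (h(k := x))) \<in> borel_measurable borel"
    proof -
      have "(\<lambda>x. ((\<lambda>_. h) x)(k := id x)) \<in> measurable borel (PB (Suc k))"
        by (rule upd_meas) (auto intro: measurable_const[OF hs])
      from measurable_comp[OF this g] show ?thesis by (simp add: comp_def)
    qed
    let ?a = "chosen_val (A k r h) (\<not>c)" and ?b = "chosen_val (A k r h) c"
    have "G h = (\<integral>\<^sup>+t. g (h(k := ?a + t)) \<partial>laplace \<beta>)" by (simp add: G_def)
    also have "\<dots> = (\<integral>\<^sup>+t. g (h(k := ?b + t)) * ennreal (exp (- (\<bar>t + (?b - ?a)\<bar> - \<bar>t\<bar>) / \<beta>)) \<partial>laplace \<beta>)"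
      by (rule laplace_shift[OF gh])
    finally have Gh: "G h = (\<integral>\<^sup>+t. g (h(k := ?b + t)) * ennreal (exp (- (\<bar>t + (?b - ?a)\<bar> - \<bar>t\<bar>) / \<beta>)) \<partial>laplace \<beta>)" .
    have Fm: "(\<lambda>t. g (h(k := ?b + t)) * ennreal (exp (- (\<bar>t + (?b - ?a)\<bar> - \<bar>t\<bar>) / \<beta>))) \<in> borel_measurable (laplace \<beta>)"
    proof -
      have "(\<lambda>t. ?b + t) \<in> borel_measurable borel" by simp
      from measurable_comp[OF this gh] have g1: "(\<lambda>t. g (h(k := ?b + t))) \<in> borel_measurable borel" by (simp add: comp_def)
      have l1: "(\<lambda>t. - (- (\<bar>t + (?b - ?a)\<bar> - \<bar>t\<bar>) / \<beta>)) \<in> borel_measurable borel" by measurable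
      from meas_prod_exp[OF g1 l1] have "(\<lambda>t. g (h(k := ?b + t)) * ennreal (exp (- (\<bar>t + (?b - ?a)\<bar> - \<bar>t\<bar>) / \<beta>))) \<in> borel_measurable borel" by simp
      then show ?thesis using measurable_cong_sets[OF sets_laplace refl, of \<beta> borel] by simp
    qed
    have "G h * ennreal (exp (- Lam \<beta> A c r z k)) = (\<integral>\<^sup>+t. g (h(k := ?b + t)) * ennreal (exp (- (\<bar>t + (?b - ?a)\<bar> - \<bar>t\<bar>) / \<beta>)) * ennreal (exp (- Lam \<beta> A c r z k)) \<partial>laplace \<beta>)"
      unfolding Gh by (rule nn_integral_multc[OF Fm, symmetric])
    also have "\<dots> = (\<integral>\<^sup>+t. g (outs A c r (z(k:=t)) (Suc k)) * ennreal (exp (- Lam \<beta> A c r (z(k:=t)) (Suc k))) \<partial>laplace \<beta>)"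
    proof (rule nn_integral_cong)
      fix t
      let ?X = "\<bar>t + (?b - ?a)\<bar> - \<bar>t\<bar>"
      have L: "Lam \<beta> A c r (z(k:=t)) (Suc k) = Lam \<beta> A c r z k + ?X / \<beta>"
        by (simp only: Lam_upd Dv_def h_def)
      have x1: "- ?X / \<beta> + - Lam \<beta> A c r z k = - Lam \<beta> A c r (z(k:=t)) (Suc k)"
        unfolding L by (simp add: minus_divide_left)
      have "exp (- ?X / \<beta>) * exp (- Lam \<beta> A c r z k) = exp (- Lam \<beta> A c r (z(k:=t)) (Suc k))"
        by (simp only: mult_exp_exp x1)
      then have e: "ennreal (exp (- ?X / \<beta>)) * ennreal (exp (- Lam \<beta> A c r z k))
             = ennreal (exp (- Lam \<beta> A c r (z(k:=t)) (Suc k)))"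
        by (simp add: ennreal_mult[symmetric])
      show "g (h(k := ?b + t)) * ennreal (exp (- (\<bar>t + (?b - ?a)\<bar> - \<bar>t\<bar>) / \<beta>)) * ennreal (exp (- Lam \<beta> A c r z k))
          = g (outs A c r (z(k:=t)) (Suc k)) * ennreal (exp (- Lam \<beta> A c r (z(k:=t)) (Suc k)))"
        unfolding mult.assoc e by (simp only: outs_upd_Suc h_def)
    qed
    finally show "G (outs A c r z k) * ennreal (exp (- Lam \<beta> A c r z k)) = (\<integral>\<^sup>+t. g (outs A c r (z(k:=t)) (Suc k)) * ennreal (exp (- Lam \<beta> A c r (z(k:=t)) (Suc k))) \<partial>laplace \<beta>)"
      by (simp only: h_def)
  qed
  also have "\<dots> = (\<integral>\<^sup>+z. g (outs A c r z (Suc k)) * ennreal (exp (- Lam \<beta> A c r z (Suc k))) \<partial>PN \<beta> (Suc k))"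
    unfolding ins by (rule P.product_nn_integral_insert[OF _ _ m2, symmetric]) auto
  finally show ?case .
qed

lemma meas_exp_l:
  assumes [measurable]: "L \<in> borel_measurable M"
  shows "(\<lambda>z. ennreal (exp (l * L z))) \<in> borel_measurable M"
  by measurable

lemma Dv_bound:
  assumes va: "valid_adversary nb \<Delta> MR A" and r: "r \<in> space MR" and h: "h \<in> space (PB i)"
  shows "\<bar>Dv A c r h i\<bar> \<le> \<Delta>"
proof -
  obtain D0 D1 q where Aeq: "A i r h = (D0, D1, q)" by (metis prod_cases3)
  have "nb D0 D1 \<and> sensitivity_le nb q \<Delta>"
    using va r h Aeq unfolding valid_adversary_def by (metis case_prod_conv)
  then have "\<bar>q D0 - q D1\<bar> \<le> \<Delta>" unfolding sensitivity_le_def by blast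
  then show ?thesis using Aeq by (cases c) (auto simp: Dv_def chosen_val_def abs_minus_commute)
qed

lemma mgf:
  assumes va: "valid_adversary nb \<Delta> MR A" and b: "\<beta> > 0" and r: "r \<in> space MR"
    and l: "l > 0" and c0: "\<Delta> / \<beta> \<le> 1"
  shows "(\<integral>\<^sup>+z. ennreal (exp (l * Lam \<beta> A c r z k)) \<partial>PN \<beta> k) \<le> ennreal (exp (l * (\<Delta> / \<beta>)\<^sup>2 + l\<^sup>2 * (\<Delta> / \<beta>)\<^sup>2 / 2)) ^ k"
proof (induction k)
  case 0
  interpret PP: prob_space "PN \<beta> 0" by (rule prob_space_PiM) (simp add: prob_space_laplace b)
  show ?case using PP.emeasure_space_1 by (simp add: Lam_def nn_integral_const)
next
  case (Suc k)
  define M where "M = ennreal (exp (l * (\<Delta> / \<beta>)\<^sup>2 + l\<^sup>2 * (\<Delta> / \<beta>)\<^sup>2 / 2))"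
  interpret N: prob_space "laplace \<beta>" by (rule prob_space_laplace[OF b])
  interpret P: product_sigma_finite "\<lambda>_::nat. laplace \<beta>"
    by (simp add: product_sigma_finite_def prob_space_imp_sigma_finite prob_space_laplace b)
  have ins: "{..<Suc k} = insert k {..<k}" by auto
  have m1: "(\<lambda>z. ennreal (exp (l * Lam \<beta> A c r z (Suc k)))) \<in> borel_measurable (PiM (insert k {..<k}) (\<lambda>_. laplace \<beta>))"
  proof -
    from meas_exp_l[OF Lam_r_meas[OF va r order_refl]]
    have "(\<lambda>z. ennreal (exp (l * Lam \<beta> A c r z (Suc k)))) \<in> borel_measurable (PB (Suc k))" .
    from meas_PN[OF this] show ?thesis unfolding ins .
  qed
  have m0: "(\<lambda>z. ennreal (exp (l * Lam \<beta> A c r z k))) \<in> borel_measurable (PN \<beta> k)"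
    using meas_PN[OF meas_exp_l[OF Lam_r_meas[OF va r order_refl]]] .
  have "(\<integral>\<^sup>+z. ennreal (exp (l * Lam \<beta> A c r z (Suc k))) \<partial>PN \<beta> (Suc k))
      = (\<integral>\<^sup>+z. (\<integral>\<^sup>+t. ennreal (exp (l * Lam \<beta> A c r (z(k:=t)) (Suc k))) \<partial>laplace \<beta>) \<partial>PN \<beta> k)"
    unfolding ins by (rule P.product_nn_integral_insert[OF _ _ m1]) auto
  also have "\<dots> \<le> (\<integral>\<^sup>+z. ennreal (exp (l * Lam \<beta> A c r z k)) * M \<partial>PN \<beta> k)"
  proof (rule nn_integral_mono)
    fix z assume z: "z \<in> space (PN \<beta> k)"
    define d where "d = Dv A c r (outs A c r z k) k"
    have d: "\<bar>d\<bar> \<le> \<Delta>" unfolding d_def by (rule Dv_bound[OF va r outs_space])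
    have "(\<integral>\<^sup>+t. ennreal (exp (l * Lam \<beta> A c r (z(k:=t)) (Suc k))) \<partial>laplace \<beta>)
        = (\<integral>\<^sup>+t. ennreal (exp (l * Lam \<beta> A c r z k)) * ennreal (exp (l * ((\<bar>t + d\<bar> - \<bar>t\<bar>) / \<beta>))) \<partial>laplace \<beta>)"
    proof (rule nn_integral_cong)
      fix t
      have "exp (l * Lam \<beta> A c r (z(k:=t)) (Suc k)) = exp (l * Lam \<beta> A c r z k) * exp (l * ((\<bar>t + d\<bar> - \<bar>t\<bar>) / \<beta>))"
        by (simp only: Lam_upd d_def distrib_left exp_add)
      then show "ennreal (exp (l * Lam \<beta> A c r (z(k:=t)) (Suc k))) = ennreal (exp (l * Lam \<beta> A c r z k)) * ennreal (exp (l * ((\<bar>t + d\<bar> - \<bar>t\<bar>) / \<beta>)))"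
        by (simp add: ennreal_mult[symmetric])
    qed
    also have "\<dots> = ennreal (exp (l * Lam \<beta> A c r z k)) * (\<integral>\<^sup>+t. ennreal (exp (l * ((\<bar>t + d\<bar> - \<bar>t\<bar>) / \<beta>))) \<partial>laplace \<beta>)"
    proof (rule nn_integral_cmult)
      have "(\<lambda>t. ennreal (exp (l * ((\<bar>t + d\<bar> - \<bar>t\<bar>) / \<beta>)))) \<in> borel_measurable borel" by measurable
      then show "(\<lambda>t. ennreal (exp (l * ((\<bar>t + d\<bar> - \<bar>t\<bar>) / \<beta>)))) \<in> borel_measurable (laplace \<beta>)"
        using measurable_cong_sets[OF sets_laplace refl, of \<beta> borel] by simp
    qed
    also have "\<dots> \<le> ennreal (exp (l * Lam \<beta> A c r z k)) * M"
      unfolding M_def by (intro mult_left_mono one_step[OF b d c0 l]) auto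
    finally show "(\<integral>\<^sup>+t. ennreal (exp (l * Lam \<beta> A c r (z(k:=t)) (Suc k))) \<partial>laplace \<beta>) \<le> ennreal (exp (l * Lam \<beta> A c r z k)) * M" .
  qed
  also have "\<dots> = (\<integral>\<^sup>+z. ennreal (exp (l * Lam \<beta> A c r z k)) \<partial>PN \<beta> k) * M"
    by (rule nn_integral_multc[OF m0])
  also have "\<dots> \<le> M ^ k * M"
    using Suc.IH unfolding M_def by (rule mult_right_mono) simp
  also have "\<dots> = M ^ Suc k" by (simp add: mult.commute)
  finally show ?case unfolding M_def .
qed

lemma pointwise_real:
  fixes l \<epsilon> L :: real
  assumes l: "l > 0"
  shows "1 \<le> exp \<epsilon> * exp (- L) + exp (- l * \<epsilon>) / (exp 1 * l) * exp (l * L)"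
proof (cases "L \<le> \<epsilon>")
  case True
  have "exp \<epsilon> * exp (- L) = exp (\<epsilon> + - L)" by (simp add: exp_diff exp_minus divide_inverse)
  moreover have "1 \<le> exp (\<epsilon> + - L)" using True by simp
  ultimately have "1 \<le> exp \<epsilon> * exp (- L)" by simp
  moreover have "0 \<le> exp (- l * \<epsilon>) / (exp 1 * l) * exp (l * L)" using l by simp
  ultimately show ?thesis by linarith
next
  case False
  define u where "u = L - \<epsilon>"
  have u: "u > 0" using False by (simp add: u_def)
  have "exp \<epsilon> * exp (- L) = exp (- u)" by (simp add: u_def exp_add[symmetric])
  also have "\<dots> \<ge> 1 - u" using exp_ge_add_one_self[of "-u"] by simp
  finally have a: "exp \<epsilon> * exp (- L) \<ge> 1 - u" .
  have "exp (l * u - 1) \<ge> l * u" using exp_ge_add_one_self[of "l * u - 1"] by simp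
  then have "exp (l * u) / exp 1 \<ge> l * u" by (simp add: exp_diff)
  then have "exp (l * u) / (exp 1 * l) \<ge> u" using l by (simp add: field_simps)
  moreover have "exp (- l * \<epsilon>) / (exp 1 * l) * exp (l * L) = exp (l * u) / (exp 1 * l)"
    by (simp add: u_def exp_add[symmetric] right_diff_distrib)
  ultimately have b: "exp (- l * \<epsilon>) / (exp 1 * l) * exp (l * L) \<ge> u" by linarith
  from a b show ?thesis by linarith
qed

lemma pointwise_enn:
  fixes l \<epsilon> L :: real
  assumes l: "l > 0"
  shows "(indicator S x :: ennreal) \<le> ennreal (exp \<epsilon>) * (indicator S x * ennreal (exp (- L)))
            + ennreal (exp (- l * \<epsilon>) / (exp 1 * l)) * ennreal (exp (l * L))"
proof (cases "x \<in> S")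
  case True
  have "ennreal 1 \<le> ennreal (exp \<epsilon> * exp (- L) + exp (- l * \<epsilon>) / (exp 1 * l) * exp (l * L))"
    using pointwise_real[OF l] by (rule ennreal_leI)
  then show ?thesis using True l
    by (simp add: ennreal_mult[symmetric] ennreal_plus[symmetric] del: ennreal_plus)
qed simp

lemma Omega_sets: "sets (MR \<Otimes>\<^sub>M PN \<beta> k) = sets (MR \<Otimes>\<^sub>M PB k)"
  by (rule sets_pair_measure_cong) (simp_all add: sets_PN)

lemma Omega_meas: "f \<in> measurable (MR \<Otimes>\<^sub>M PB k) M \<Longrightarrow> f \<in> measurable (MR \<Otimes>\<^sub>M PN \<beta> k) M"
  using measurable_cong_sets[OF Omega_sets[of MR k \<beta>] refl] by simp

lemma V_meas:
  assumes va: "valid_adversary nb \<Delta> MR A"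
  shows "(\<lambda>(r,z). (r, outs A c r z k)) \<in> measurable (MR \<Otimes>\<^sub>M PB k) (MR \<Otimes>\<^sub>M PB k)"
  using outs_meas[OF va order_refl, of c] by (auto intro!: measurable_Pair simp: split_beta')

lemma view_eq:
  assumes va: "valid_adversary nb \<Delta> MR A" and b: "\<beta> > 0" and S: "S \<in> sets (MR \<Otimes>\<^sub>M PB k)"
  shows "emeasure (view (laplace \<beta>) MR A c k) S = (\<integral>\<^sup>+\<omega>. indicator S (fst \<omega>, outs A c (fst \<omega>) (snd \<omega>) k) \<partial>(MR \<Otimes>\<^sub>M PN \<beta> k))"
proof -
  have V: "(\<lambda>(r,z). (r, outs A c r z k)) \<in> measurable (MR \<Otimes>\<^sub>M PN \<beta> k) (MR \<Otimes>\<^sub>M PB k)"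
    by (rule Omega_meas[OF V_meas[OF va]])
  have "emeasure (view (laplace \<beta>) MR A c k) S = (\<integral>\<^sup>+x. indicator S x \<partial>view (laplace \<beta>) MR A c k)"
    using S by (simp add: view_def)
  also have "\<dots> = (\<integral>\<^sup>+\<omega>. indicator S ((\<lambda>(r,z). (r, outs A c r z k)) \<omega>) \<partial>(MR \<Otimes>\<^sub>M PN \<beta> k))"
    unfolding view_def by (rule nn_integral_distr[OF V]) (use S in simp)
  finally show ?thesis by (simp add: split_beta')
qed

lemma tonelli:
  assumes sf: "sigma_finite_measure N" and f: "(\<lambda>\<omega>. F (fst \<omega>) (snd \<omega>)) \<in> borel_measurable (M \<Otimes>\<^sub>M N)"
  shows "(\<integral>\<^sup>+\<omega>. F (fst \<omega>) (snd \<omega>) \<partial>(M \<Otimes>\<^sub>M N)) = (\<integral>\<^sup>+x. (\<integral>\<^sup>+y. F x y \<partial>N) \<partial>M)"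
  using sigma_finite_measure.nn_integral_fst[OF sf f] by simp

lemma meas_cmult_enn:
  assumes [measurable]: "f \<in> borel_measurable M"
  shows "(\<lambda>x. (c::ennreal) * f x) \<in> borel_measurable M"
  by measurable

lemma dp_general:
  assumes va: "valid_adversary nb \<Delta> MR A" and pMR: "prob_space MR" and b: "\<beta> > 0" and l: "l > 0"
    and c0: "\<Delta> / \<beta> \<le> 1" and S: "S \<in> sets (MR \<Otimes>\<^sub>M PB k)"
  shows "emeasure (view (laplace \<beta>) MR A c k) S \<le> ennreal (exp \<epsilon>) * emeasure (view (laplace \<beta>) MR A (\<not>c) k) S
           + ennreal (exp (- l * \<epsilon>) / (exp 1 * l)) * ennreal (exp (l * (\<Delta> / \<beta>)\<^sup>2 + l\<^sup>2 * (\<Delta> / \<beta>)\<^sup>2 / 2)) ^ k"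
proof -
  interpret MR: prob_space MR by (rule pMR)
  interpret PNp: prob_space "PN \<beta> k" by (rule prob_space_PiM) (simp add: prob_space_laplace b)
  have sf: "sigma_finite_measure (PN \<beta> k)" by (rule prob_space_imp_sigma_finite) (rule PNp.prob_space_axioms)
  define K where "K = ennreal (exp (- l * \<epsilon>) / (exp 1 * l))"
  define M where "M = ennreal (exp (l * (\<Delta> / \<beta>)\<^sup>2 + l\<^sup>2 * (\<Delta> / \<beta>)\<^sup>2 / 2))"
  have Im: "(\<lambda>\<omega>. indicator S (fst \<omega>, outs A d (fst \<omega>) (snd \<omega>) k) :: ennreal) \<in> borel_measurable (MR \<Otimes>\<^sub>M PN \<beta> k)" for d
    using measurable_comp[OF Omega_meas[OF V_meas[OF va, of d k]] borel_measurable_indicator[OF S]]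
    by (simp add: comp_def split_beta')
  have Lm: "(\<lambda>\<omega>. Lam \<beta> A c (fst \<omega>) (snd \<omega>) k) \<in> borel_measurable (MR \<Otimes>\<^sub>M PN \<beta> k)"
    using Omega_meas[OF Lam_meas[OF va order_refl, of \<beta> c]] by (simp add: split_beta')
  have m1: "(\<lambda>\<omega>. indicator S (fst \<omega>, outs A c (fst \<omega>) (snd \<omega>) k) * ennreal (exp (- Lam \<beta> A c (fst \<omega>) (snd \<omega>) k))) \<in> borel_measurable (MR \<Otimes>\<^sub>M PN \<beta> k)"
    by (rule meas_prod_exp[OF Im Lm])
  have m2: "(\<lambda>\<omega>. ennreal (exp (l * Lam \<beta> A c (fst \<omega>) (snd \<omega>) k))) \<in> borel_measurable (MR \<Otimes>\<^sub>M PN \<beta> k)"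
    by (rule meas_exp_l[OF Lm])
  have "emeasure (view (laplace \<beta>) MR A c k) S = (\<integral>\<^sup>+\<omega>. indicator S (fst \<omega>, outs A c (fst \<omega>) (snd \<omega>) k) \<partial>(MR \<Otimes>\<^sub>M PN \<beta> k))"
    by (rule view_eq[OF va b S])
  also have "\<dots> \<le> (\<integral>\<^sup>+\<omega>. ennreal (exp \<epsilon>) * (indicator S (fst \<omega>, outs A c (fst \<omega>) (snd \<omega>) k) * ennreal (exp (- Lam \<beta> A c (fst \<omega>) (snd \<omega>) k)))
        + K * ennreal (exp (l * Lam \<beta> A c (fst \<omega>) (snd \<omega>) k)) \<partial>(MR \<Otimes>\<^sub>M PN \<beta> k))"
    unfolding K_def by (intro nn_integral_mono pointwise_enn[OF l])
  also have "\<dots> = (\<integral>\<^sup>+\<omega>. ennreal (exp \<epsilon>) * (indicator S (fst \<omega>, outs A c (fst \<omega>) (snd \<omega>) k) * ennreal (exp (- Lam \<beta> A c (fst \<omega>) (snd \<omega>) k))) \<partial>(MR \<Otimes>\<^sub>M PN \<beta> k))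
        + (\<integral>\<^sup>+\<omega>. K * ennreal (exp (l * Lam \<beta> A c (fst \<omega>) (snd \<omega>) k)) \<partial>(MR \<Otimes>\<^sub>M PN \<beta> k))"
    by (rule nn_integral_add[OF meas_cmult_enn[OF m1] meas_cmult_enn[OF m2]])
  also have "\<dots> = ennreal (exp \<epsilon>) * (\<integral>\<^sup>+\<omega>. indicator S (fst \<omega>, outs A c (fst \<omega>) (snd \<omega>) k) * ennreal (exp (- Lam \<beta> A c (fst \<omega>) (snd \<omega>) k)) \<partial>(MR \<Otimes>\<^sub>M PN \<beta> k))
        + K * (\<integral>\<^sup>+\<omega>. ennreal (exp (l * Lam \<beta> A c (fst \<omega>) (snd \<omega>) k)) \<partial>(MR \<Otimes>\<^sub>M PN \<beta> k))"
    by (simp only: nn_integral_cmult[OF m1] nn_integral_cmult[OF m2])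
  also have "(\<integral>\<^sup>+\<omega>. indicator S (fst \<omega>, outs A c (fst \<omega>) (snd \<omega>) k) * ennreal (exp (- Lam \<beta> A c (fst \<omega>) (snd \<omega>) k)) \<partial>(MR \<Otimes>\<^sub>M PN \<beta> k))
      = emeasure (view (laplace \<beta>) MR A (\<not>c) k) S"
  proof -
    have "(\<integral>\<^sup>+\<omega>. indicator S (fst \<omega>, outs A c (fst \<omega>) (snd \<omega>) k) * ennreal (exp (- Lam \<beta> A c (fst \<omega>) (snd \<omega>) k)) \<partial>(MR \<Otimes>\<^sub>M PN \<beta> k))
       = (\<integral>\<^sup>+r. (\<integral>\<^sup>+z. indicator S (r, outs A c r z k) * ennreal (exp (- Lam \<beta> A c r z k)) \<partial>PN \<beta> k) \<partial>MR)"
      by (rule tonelli[OF sf m1])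
    also have "\<dots> = (\<integral>\<^sup>+r. (\<integral>\<^sup>+z. indicator S (r, outs A (\<not>c) r z k) \<partial>PN \<beta> k) \<partial>MR)"
    proof (rule nn_integral_cong)
      fix r assume r: "r \<in> space MR"
      have g: "(\<lambda>h. indicator S (r, h) :: ennreal) \<in> borel_measurable (PB k)"
        using measurable_comp[OF measurable_Pair1'[OF r] borel_measurable_indicator[OF S]] by (simp add: comp_def)
      show "(\<integral>\<^sup>+z. indicator S (r, outs A c r z k) * ennreal (exp (- Lam \<beta> A c r z k)) \<partial>PN \<beta> k) = (\<integral>\<^sup>+z. indicator S (r, outs A (\<not>c) r z k) \<partial>PN \<beta> k)"
        using com[OF va b r g, of c] by simp
    qed
    also have "\<dots> = (\<integral>\<^sup>+\<omega>. indicator S (fst \<omega>, outs A (\<not>c) (fst \<omega>) (snd \<omega>) k) \<partial>(MR \<Otimes>\<^sub>M PN \<beta> k))"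
      by (rule tonelli[OF sf Im, symmetric])
    also have "\<dots> = emeasure (view (laplace \<beta>) MR A (\<not>c) k) S"
      by (rule view_eq[OF va b S, symmetric])
    finally show ?thesis .
  qed
  also have "(\<integral>\<^sup>+\<omega>. ennreal (exp (l * Lam \<beta> A c (fst \<omega>) (snd \<omega>) k)) \<partial>(MR \<Otimes>\<^sub>M PN \<beta> k)) \<le> M ^ k"
  proof -
    have "(\<integral>\<^sup>+\<omega>. ennreal (exp (l * Lam \<beta> A c (fst \<omega>) (snd \<omega>) k)) \<partial>(MR \<Otimes>\<^sub>M PN \<beta> k))
       = (\<integral>\<^sup>+r. (\<integral>\<^sup>+z. ennreal (exp (l * Lam \<beta> A c r z k)) \<partial>PN \<beta> k) \<partial>MR)"
      by (rule tonelli[OF sf m2])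
    also have "\<dots> \<le> (\<integral>\<^sup>+r. M ^ k \<partial>MR)"
      unfolding M_def by (intro nn_integral_mono mgf[OF va b _ l c0]) auto
    also have "\<dots> = M ^ k" by (simp add: nn_integral_const MR.emeasure_space_1)
    finally show ?thesis .
  qed
  finally show ?thesis unfolding K_def M_def by (simp add: mult_left_mono add_left_mono)
qed

lemma params:
  fixes \<Delta> \<epsilon> \<delta> :: real and k :: nat
  assumes D: "\<Delta> > 0" and e0: "0 < \<epsilon>" and e1: "\<epsilon> \<le> 9/10" and d0: "0 < \<delta>" and d1: "\<delta> \<le> 1" and k: "k \<ge> 1"
  defines "L \<equiv> ln (exp 1 + \<epsilon> / \<delta>)"
  defines "\<beta> \<equiv> sqrt ((8 * real k * \<Delta>\<^sup>2 * L / \<epsilon>\<^sup>2) / 2)"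
  defines "l \<equiv> 4 * L / \<epsilon>"
  shows "\<beta> > 0" "\<Delta> / \<beta> \<le> 1" "l > 0"
    "exp (- l * \<epsilon>) / (exp 1 * l) * exp (l * (\<Delta> / \<beta>)\<^sup>2 + l\<^sup>2 * (\<Delta> / \<beta>)\<^sup>2 / 2) ^ k \<le> \<delta>"
proof -
  define x where "x = \<epsilon> / \<delta>"
  have x0: "x > 0" using e0 d0 by (simp add: x_def)
  have pos: "exp 1 + x > 0" using x0 by (simp add: add_pos_pos)
  have eL: "exp L = exp 1 + x" using pos by (simp add: L_def x_def)
  have L1: "L \<ge> 1" unfolding L_def using pos x0 by (subst ln_ge_iff) (auto simp: x_def)
  have kpos: "real k \<ge> 1" using k by simp
  define X where "X = (8 * real k * \<Delta>\<^sup>2 * L / \<epsilon>\<^sup>2) / 2"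
  have X: "X = 4 * real k * \<Delta>\<^sup>2 * L / \<epsilon>\<^sup>2" by (simp add: X_def)
  have X0: "X > 0" using D e0 L1 kpos by (simp add: X)
  have bsX: "\<beta> = sqrt X" unfolding \<beta>_def X_def by (rule refl)
  have bX: "\<beta>\<^sup>2 = X" using X0 by (simp add: bsX)
  show b0: "\<beta> > 0" using X0 by (simp add: bsX)
  have q: "(\<Delta> / \<beta>)\<^sup>2 = \<epsilon>\<^sup>2 / (4 * real k * L)"
    using D e0 L1 kpos b0 by (simp add: power_divide bX X field_simps)
  have q1: "(\<Delta> / \<beta>)\<^sup>2 \<le> 1"
  proof -
    have "\<epsilon>\<^sup>2 \<le> 1" using e0 e1 by (simp add: power_le_one)
    also have "1 \<le> 4 * real k * L"
    proof -
      have kL: "1 \<le> real k * L" using mult_mono[OF kpos L1] kpos by simp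
      then show ?thesis by (simp add: mult.assoc)
    qed
    finally show ?thesis using kpos L1 by (simp add: q)
  qed
  show "\<Delta> / \<beta> \<le> 1"
    using power2_le_imp_le[of "\<Delta> / \<beta>" 1] q1 by simp
  show l0: "l > 0" using L1 e0 by (simp add: l_def)
  have E: "real k * (l * (\<Delta> / \<beta>)\<^sup>2 + l\<^sup>2 * (\<Delta> / \<beta>)\<^sup>2 / 2) = \<epsilon> + 2 * L"
    unfolding q l_def using e0 L1 kpos by (simp add: field_simps power2_eq_square)
  have "exp (l * (\<Delta> / \<beta>)\<^sup>2 + l\<^sup>2 * (\<Delta> / \<beta>)\<^sup>2 / 2) ^ k = exp (\<epsilon> + 2 * L)"
    by (simp add: exp_of_nat_mult[symmetric] E)
  then have "exp (- l * \<epsilon>) / (exp 1 * l) * exp (l * (\<Delta> / \<beta>)\<^sup>2 + l\<^sup>2 * (\<Delta> / \<beta>)\<^sup>2 / 2) ^ k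
      = exp (- l * \<epsilon>) * exp (\<epsilon> + 2 * L) / (exp 1 * l)" by simp
  also have "exp (- l * \<epsilon>) * exp (\<epsilon> + 2 * L) = exp \<epsilon> / (exp L)\<^sup>2"
  proof -
    have "- l * \<epsilon> + (\<epsilon> + 2 * L) = \<epsilon> - 2 * L" using e0 by (simp add: l_def)
    then have "exp (- l * \<epsilon>) * exp (\<epsilon> + 2 * L) = exp (\<epsilon> - 2 * L)" by (simp add: exp_add[symmetric])
    also have "\<dots> = exp \<epsilon> / (exp L)\<^sup>2" by (simp add: exp_diff power2_eq_square exp_add[symmetric])
    finally show ?thesis .
  qed
  also have "exp \<epsilon> / (exp L)\<^sup>2 / (exp 1 * l) = exp \<epsilon> * \<epsilon> / (4 * exp 1 * L * (exp 1 + x)\<^sup>2)"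
    using e0 L1 pos by (simp add: eL l_def field_simps)
  also have "\<dots> \<le> exp 1 * \<epsilon> / (4 * exp 1 * 1 * (exp 1 + x)\<^sup>2)"
  proof (rule frac_le)
    show "exp \<epsilon> * \<epsilon> \<le> exp 1 * \<epsilon>" using e0 e1 by (intro mult_right_mono) auto
    show "4 * exp 1 * 1 * (exp 1 + x)\<^sup>2 \<le> 4 * exp 1 * L * (exp 1 + x)\<^sup>2"
      using L1 by (intro mult_right_mono mult_left_mono) auto
  qed (use e0 pos in auto)
  also have "\<dots> = \<epsilon> / (4 * (exp 1 + x)\<^sup>2)" by simp
  also have "\<dots> \<le> \<epsilon> / (4 * x)"
  proof (rule divide_left_mono)
    have e1x: "1 * x \<le> exp 1 * x" using x0 by (intro mult_right_mono) auto
    have xx: "0 \<le> x * x" by simp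
    have "x \<le> (exp 1 + x) * x" unfolding distrib_right using e1x xx by linarith
    also have "\<dots> \<le> (exp 1 + x) * (exp 1 + x)" using pos x0 by (intro mult_left_mono) auto
    finally show "4 * x \<le> 4 * (exp 1 + x)\<^sup>2" by (simp add: power2_eq_square)
  qed (use e0 x0 pos in auto)
  also have "\<dots> = \<delta> / 4" using e0 d0 by (simp add: x_def)
  also have "\<dots> \<le> \<delta>" using d0 by simp
  finally show "exp (- l * \<epsilon>) / (exp 1 * l) * exp (l * (\<Delta> / \<beta>)\<^sup>2 + l\<^sup>2 * (\<Delta> / \<beta>)\<^sup>2 / 2) ^ k \<le> \<delta>" .
qed

lemma mse_integrand: "(outs A c r z k i - chosen_val (A i r (outs A c r z i)) c)\<^sup>2 = (z i)\<^sup>2" if "i < k"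
  by (subst outs_stable[OF that]) (simp add: Let_def)

lemma mse_integrand_sum: "(\<Sum>i<k. (outs A c r z k i - chosen_val (A i r (outs A c r z i)) c)\<^sup>2) = (\<Sum>i<k. (z i)\<^sup>2)"
  by (rule sum.cong) (simp_all add: mse_integrand)

lemma mse:
  assumes pMR: "prob_space MR" and b: "\<beta> > 0"
  shows "comp_mse (laplace \<beta>) MR A c k = ennreal (2 * \<beta>\<^sup>2 * real k)"
proof -
  interpret MR: prob_space MR by (rule pMR)
  interpret PNp: prob_space "PN \<beta> k" by (rule prob_space_PiM) (simp add: prob_space_laplace b)
  have sf: "sigma_finite_measure (PN \<beta> k)" by (rule prob_space_imp_sigma_finite) (rule PNp.prob_space_axioms)
  have comp: "(\<lambda>z. z i) \<in> borel_measurable (PN \<beta> k)" if "i < k" for i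
  proof -
    have "(\<lambda>z. z i) \<in> measurable (PN \<beta> k) (laplace \<beta>)"
      using that by (intro measurable_component_singleton) auto
    then show ?thesis using measurable_cong_sets[OF refl sets_laplace, of "PN \<beta> k" \<beta>] by simp
  qed
  have sq: "(\<lambda>z. ennreal ((z i)\<^sup>2)) \<in> borel_measurable (PN \<beta> k)" if "i < k" for i
  proof -
    have "(\<lambda>x::real. ennreal (x\<^sup>2)) \<in> borel_measurable borel" by measurable
    from measurable_comp[OF comp[OF that] this] show ?thesis by (simp add: comp_def)
  qed
  have sm: "(\<lambda>z. ennreal (\<Sum>i<k. (z i)\<^sup>2)) \<in> borel_measurable (PN \<beta> k)"
  proof -
    have "(\<lambda>z. \<Sum>i<k. (z i)\<^sup>2) \<in> borel_measurable (PN \<beta> k)"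
      by (rule borel_measurable_sum) (use comp in auto)
    then show ?thesis by (rule measurable_compose[OF _ measurable_ennreal])
  qed
  have "comp_mse (laplace \<beta>) MR A c k = (\<integral>\<^sup>+\<omega>. (\<lambda>r z. ennreal (\<Sum>i<k. (z i)\<^sup>2)) (fst \<omega>) (snd \<omega>) \<partial>(MR \<Otimes>\<^sub>M PN \<beta> k))"
    unfolding comp_mse_def by (intro nn_integral_cong) (simp add: split_beta' mse_integrand_sum)
  also have "\<dots> = (\<integral>\<^sup>+r. (\<integral>\<^sup>+z. ennreal (\<Sum>i<k. (z i)\<^sup>2) \<partial>PN \<beta> k) \<partial>MR)"
  proof (rule tonelli[OF sf])
    show "(\<lambda>\<omega>. (\<lambda>r z. ennreal (\<Sum>i<k. (z i)\<^sup>2)) (fst \<omega>) (snd \<omega>)) \<in> borel_measurable (MR \<Otimes>\<^sub>M PN \<beta> k)"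
      using measurable_comp[OF measurable_snd sm] by (simp add: comp_def)
  qed
  also have "(\<integral>\<^sup>+z. ennreal (\<Sum>i<k. (z i)\<^sup>2) \<partial>PN \<beta> k) = ennreal (2 * \<beta>\<^sup>2 * real k)"
  proof -
    have "(\<integral>\<^sup>+z. ennreal (\<Sum>i<k. (z i)\<^sup>2) \<partial>PN \<beta> k) = (\<integral>\<^sup>+z. (\<Sum>i<k. ennreal ((z i)\<^sup>2)) \<partial>PN \<beta> k)"
      by (intro nn_integral_cong sum_ennreal[symmetric]) simp
    also have "\<dots> = (\<Sum>i<k. (\<integral>\<^sup>+z. ennreal ((z i)\<^sup>2) \<partial>PN \<beta> k))"
      by (rule nn_integral_sum, rule sq) simp
    also have "\<dots> = (\<Sum>i<k. ennreal (2 * \<beta>\<^sup>2))"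
    proof (rule sum.cong)
      fix i assume i: "i \<in> {..<k}"
      have "(\<integral>\<^sup>+z. ennreal ((z i)\<^sup>2) \<partial>PN \<beta> k) = (\<integral>\<^sup>+x. ennreal (x\<^sup>2) \<partial>distr (PN \<beta> k) (laplace \<beta>) (\<lambda>z. z i))"
      proof (rule nn_integral_distr[symmetric])
        show "(\<lambda>z. z i) \<in> measurable (PN \<beta> k) (laplace \<beta>)" using i by (intro measurable_component_singleton) auto
        show "(\<lambda>x. ennreal (x\<^sup>2)) \<in> borel_measurable (distr (PN \<beta> k) (laplace \<beta>) (\<lambda>z. z i))"
          using measurable_cong_sets[of "distr (PN \<beta> k) (laplace \<beta>) (\<lambda>z. z i)" borel borel borel] by simp
      qed
      also have "distr (PN \<beta> k) (laplace \<beta>) (\<lambda>z. z i) = laplace \<beta>"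
        by (rule distr_PiM_component) (use i b prob_space_laplace in auto)
      also have "(\<integral>\<^sup>+x. ennreal (x\<^sup>2) \<partial>laplace \<beta>) = (\<integral>\<^sup>+x. ennreal (\<bar>x\<bar> ^ 2) \<partial>laplace \<beta>)" by simp
      also have "\<dots> = ennreal (fact 2 * \<beta> ^ 2)" by (rule laplace_abs_moment[OF b])
      finally show "(\<integral>\<^sup>+z. ennreal ((z i)\<^sup>2) \<partial>PN \<beta> k) = ennreal (2 * \<beta>\<^sup>2)" by simp
    qed simp
    also have "\<dots> = ennreal (2 * \<beta>\<^sup>2 * real k)"
      by (simp add: ennreal_of_nat_eq_real_of_nat ennreal_mult'' mult.commute)
    finally show ?thesis .
  qed
  also have "(\<integral>\<^sup>+r. ennreal (2 * \<beta>\<^sup>2 * real k) \<partial>MR) = ennreal (2 * \<beta>\<^sup>2 * real k)"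
    by (simp add: nn_integral_const MR.emeasure_space_1)
  finally show ?thesis .
qed


lemma view_prob:
  assumes va: "valid_adversary nb \<Delta> MR A" and pMR: "prob_space MR" and b: "\<beta> > 0"
  shows "prob_space (view (laplace \<beta>) MR A c k)"
proof -
  have pN: "prob_space (PN \<beta> k)" by (rule prob_space_PiM) (simp add: prob_space_laplace b)
  have pO: "prob_space (MR \<Otimes>\<^sub>M PN \<beta> k)" by (rule prob_space_pair[OF pMR pN])
  show ?thesis unfolding view_def
    by (rule prob_space.prob_space_distr[OF pO Omega_meas[OF V_meas[OF va]]])
qed

lemma dp_measure:
  assumes va: "valid_adversary nb \<Delta> MR A" and pMR: "prob_space MR" and b: "\<beta> > 0" and l: "l > 0"
    and c0: "\<Delta> / \<beta> \<le> 1" and S: "S \<in> sets (MR \<Otimes>\<^sub>M PB k)"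
    and bound: "exp (- l * \<epsilon>) / (exp 1 * l) * exp (l * (\<Delta> / \<beta>)\<^sup>2 + l\<^sup>2 * (\<Delta> / \<beta>)\<^sup>2 / 2) ^ k \<le> \<delta>"
  shows "measure (view (laplace \<beta>) MR A c k) S \<le> exp \<epsilon> * measure (view (laplace \<beta>) MR A (\<not>c) k) S + \<delta>"
proof -
  interpret P: prob_space "view (laplace \<beta>) MR A c k" by (rule view_prob[OF va pMR b])
  interpret Q: prob_space "view (laplace \<beta>) MR A (\<not>c) k" by (rule view_prob[OF va pMR b])
  define K where "K = exp (- l * \<epsilon>) / (exp 1 * l)"
  define M where "M = exp (l * (\<Delta> / \<beta>)\<^sup>2 + l\<^sup>2 * (\<Delta> / \<beta>)\<^sup>2 / 2)"
  have K0: "K \<ge> 0" using l by (simp add: K_def)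
  have "ennreal K * ennreal M ^ k = ennreal (K * M ^ k)"
    using K0 by (simp add: ennreal_power ennreal_mult M_def)
  also have "\<dots> \<le> ennreal \<delta>" using bound by (intro ennreal_leI) (simp add: K_def M_def)
  finally have KM: "ennreal K * ennreal M ^ k \<le> ennreal \<delta>" .
  have d0: "\<delta> \<ge> 0"
  proof -
    have "0 \<le> K * M ^ k" using K0 by (simp add: M_def)
    then show ?thesis using bound by (simp add: K_def M_def)
  qed
  have "ennreal (measure (view (laplace \<beta>) MR A c k) S) = emeasure (view (laplace \<beta>) MR A c k) S"
    by (simp add: P.emeasure_eq_measure)
  also have "\<dots> \<le> ennreal (exp \<epsilon>) * emeasure (view (laplace \<beta>) MR A (\<not>c) k) S + ennreal K * ennreal M ^ k"
    unfolding K_def M_def by (rule dp_general[OF va pMR b l c0 S])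
  also have "\<dots> \<le> ennreal (exp \<epsilon>) * emeasure (view (laplace \<beta>) MR A (\<not>c) k) S + ennreal \<delta>"
    by (rule add_left_mono[OF KM])
  also have "\<dots> = ennreal (exp \<epsilon> * measure (view (laplace \<beta>) MR A (\<not>c) k) S + \<delta>)"
    using d0 by (simp add: Q.emeasure_eq_measure ennreal_mult[symmetric] ennreal_plus[symmetric] del: ennreal_plus)
  finally have fin: "ennreal (measure (view (laplace \<beta>) MR A c k) S) \<le> ennreal (exp \<epsilon> * measure (view (laplace \<beta>) MR A (\<not>c) k) S + \<delta>)" .
  have "0 \<le> exp \<epsilon> * measure (view (laplace \<beta>) MR A (\<not>c) k) S + \<delta>" using d0 by simp
  with fin show ?thesis by (simp add: ennreal_le_iff)
qed

theorem corollary3: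
  fixes nb :: "'db \<Rightarrow> 'db \<Rightarrow> bool"
  assumes "symp nb"
  shows "(\<forall>(\<Delta>::real) (\<epsilon>::real) (\<delta>::real) (k::nat).
            \<Delta> > 0 \<and> 0 < \<epsilon> \<and> \<epsilon> \<le> 9/10 \<and> 0 < \<delta> \<and> \<delta> \<le> 1 \<and> k \<ge> 1 \<longrightarrow>
            adaptive_dp nb \<Delta>
              (laplace (sqrt ((8 * real k * \<Delta>\<^sup>2 * ln (exp 1 + \<epsilon> / \<delta>) / \<epsilon>\<^sup>2) / 2)))
              k \<epsilon> \<delta> TYPE('r))
       \<and> (\<exists>C::real. \<forall>(\<Delta>::real) (\<epsilon>::real) (\<delta>::real) (k::nat).
            \<Delta> > 0 \<and> 0 < \<epsilon> \<and> \<epsilon> \<le> 9/10 \<and> 0 < \<delta> \<and> \<delta> \<le> 1 \<and> k \<ge> 1 \<longrightarrow>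
            (\<forall>(MR::'r measure) (A :: ('r, 'db) adversary) b.
               prob_space MR \<and> valid_adversary nb \<Delta> MR A \<longrightarrow>
               comp_mse (laplace (sqrt ((8 * real k * \<Delta>\<^sup>2 * ln (exp 1 + \<epsilon> / \<delta>) / \<epsilon>\<^sup>2) / 2)))
                 MR A b k
               \<le> ennreal (C * real k ^ 2 * \<Delta>\<^sup>2 * ln (exp 1 + \<epsilon> / \<delta>) / \<epsilon>\<^sup>2)))"
proof (intro conjI)
  show "\<forall>(\<Delta>::real) (\<epsilon>::real) (\<delta>::real) (k::nat).
            \<Delta> > 0 \<and> 0 < \<epsilon> \<and> \<epsilon> \<le> 9/10 \<and> 0 < \<delta> \<and> \<delta> \<le> 1 \<and> k \<ge> 1 \<longrightarrow>
            adaptive_dp nb \<Delta>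
              (laplace (sqrt ((8 * real k * \<Delta>\<^sup>2 * ln (exp 1 + \<epsilon> / \<delta>) / \<epsilon>\<^sup>2) / 2)))
              k \<epsilon> \<delta> TYPE('r)"
  proof (intro allI impI)
    fix \<Delta> \<epsilon> \<delta> :: real and k :: nat
    assume H: "\<Delta> > 0 \<and> 0 < \<epsilon> \<and> \<epsilon> \<le> 9/10 \<and> 0 < \<delta> \<and> \<delta> \<le> 1 \<and> k \<ge> 1"
    define \<beta> where "\<beta> = sqrt ((8 * real k * \<Delta>\<^sup>2 * ln (exp 1 + \<epsilon> / \<delta>) / \<epsilon>\<^sup>2) / 2)"
    define l where "l = 4 * ln (exp 1 + \<epsilon> / \<delta>) / \<epsilon>"
    have P: "\<beta> > 0" "\<Delta> / \<beta> \<le> 1" "l > 0"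
      "exp (- l * \<epsilon>) / (exp 1 * l) * exp (l * (\<Delta> / \<beta>)\<^sup>2 + l\<^sup>2 * (\<Delta> / \<beta>)\<^sup>2 / 2) ^ k \<le> \<delta>"
      using params[of \<Delta> \<epsilon> \<delta> k] H unfolding \<beta>_def l_def by auto
    show "adaptive_dp nb \<Delta> (laplace (sqrt ((8 * real k * \<Delta>\<^sup>2 * ln (exp 1 + \<epsilon> / \<delta>) / \<epsilon>\<^sup>2) / 2))) k \<epsilon> \<delta> TYPE('r)"
      unfolding \<beta>_def[symmetric] adaptive_dp_def
    proof (intro allI impI ballI)
      fix MR :: "'r measure" and A :: "('r, 'db) adversary" and S
      assume MA: "prob_space MR \<and> valid_adversary nb \<Delta> MR A"
      assume S: "S \<in> sets (MR \<Otimes>\<^sub>M PB k)"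
      have 1: "measure (view (laplace \<beta>) MR A False k) S \<le> exp \<epsilon> * measure (view (laplace \<beta>) MR A (\<not>False) k) S + \<delta>"
        using MA by (intro dp_measure[OF _ _ P(1) P(3) P(2) S P(4)]) auto
      have 2: "measure (view (laplace \<beta>) MR A True k) S \<le> exp \<epsilon> * measure (view (laplace \<beta>) MR A (\<not>True) k) S + \<delta>"
        using MA by (intro dp_measure[OF _ _ P(1) P(3) P(2) S P(4)]) auto
      show "measure (view (laplace \<beta>) MR A False k) S \<le> exp \<epsilon> * measure (view (laplace \<beta>) MR A True k) S + \<delta> \<and>
            measure (view (laplace \<beta>) MR A True k) S \<le> exp \<epsilon> * measure (view (laplace \<beta>) MR A False k) S + \<delta>"
        using 1 2 by simp
    qed
  qed
next
  show "\<exists>C::real. \<forall>(\<Delta>::real) (\<epsilon>::real) (\<delta>::real) (k::nat).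
            \<Delta> > 0 \<and> 0 < \<epsilon> \<and> \<epsilon> \<le> 9/10 \<and> 0 < \<delta> \<and> \<delta> \<le> 1 \<and> k \<ge> 1 \<longrightarrow>
            (\<forall>(MR::'r measure) (A :: ('r, 'db) adversary) b.
               prob_space MR \<and> valid_adversary nb \<Delta> MR A \<longrightarrow>
               comp_mse (laplace (sqrt ((8 * real k * \<Delta>\<^sup>2 * ln (exp 1 + \<epsilon> / \<delta>) / \<epsilon>\<^sup>2) / 2)))
                 MR A b k
               \<le> ennreal (C * real k ^ 2 * \<Delta>\<^sup>2 * ln (exp 1 + \<epsilon> / \<delta>) / \<epsilon>\<^sup>2))"
  proof (intro exI[of _ 8] allI impI)
    fix \<Delta> \<epsilon> \<delta> :: real and k :: nat and MR :: "'r measure" and A :: "('r, 'db) adversary" and b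
    assume H: "\<Delta> > 0 \<and> 0 < \<epsilon> \<and> \<epsilon> \<le> 9/10 \<and> 0 < \<delta> \<and> \<delta> \<le> 1 \<and> k \<ge> 1"
    assume MA: "prob_space MR \<and> valid_adversary nb \<Delta> MR A"
    define L where "L = ln (exp 1 + \<epsilon> / \<delta>)"
    define X where "X = (8 * real k * \<Delta>\<^sup>2 * L / \<epsilon>\<^sup>2) / 2"
    have L0: "L \<ge> 0"
    proof -
      have "1 \<le> exp 1 + \<epsilon> / \<delta>" using H by (smt (verit) divide_pos_pos one_le_exp_iff)
      then show ?thesis unfolding L_def by simp
    qed
    have X0: "X \<ge> 0" using L0 by (simp add: X_def)
    have b0: "sqrt X > 0"
      using params(1)[of \<Delta> \<epsilon> \<delta> k] H unfolding X_def L_def by auto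
    have "comp_mse (laplace (sqrt X)) MR A b k = ennreal (2 * (sqrt X)\<^sup>2 * real k)"
      using MA b0 by (intro mse) auto
    also have "2 * (sqrt X)\<^sup>2 * real k = 8 * real k ^ 2 * \<Delta>\<^sup>2 * L / \<epsilon>\<^sup>2"
    proof -
      have sq: "(sqrt X)\<^sup>2 = X" using X0 by simp
      show ?thesis unfolding sq X_def using L0 H by (simp add: power2_eq_square abs_mult)
    qed
    finally show "comp_mse (laplace (sqrt ((8 * real k * \<Delta>\<^sup>2 * ln (exp 1 + \<epsilon> / \<delta>) / \<epsilon>\<^sup>2) / 2))) MR A b k
               \<le> ennreal (8 * real k ^ 2 * \<Delta>\<^sup>2 * ln (exp 1 + \<epsilon> / \<delta>) / \<epsilon>\<^sup>2)"
      unfolding X_def L_def by simp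
  qed
qed

end
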